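(* Let $\mathrm{M}$ be a simple matroid on a finite set $E$ and $\mathcal{G}$ a building set of its lattice of flats such that $(\mathrm{M},\mathcal{G})$ is flag, and let $e\in E$. Then the deletion $(\mathrm{M}\setminus e,\mathcal{G}\setminus e)$ is flag, where $\mathcal{G}\setminus e=\{S\in\mathcal{L}(\mathrm{M}\setminus e):\operatorname{cl}_{\mathrm{M}}(S)\in\mathcal{G}\}$.
   Context: Flats are ordered by inclusion, $\hat0=\varnothing$, $F\vee G=\operatorname{cl}(F\cup G)$. A building set of a geometric lattice $\mathcal{L}$ is $\mathcal{G}\subseteq\mathcal{L}\setminus\{\hat0\}$ such that for every $F\neq\hat0$ the join map $\prod_{G\in\max\mathcal{G}_{\leqslant F}}[\hat0,G]\to[\hat0,F]$ is a poset isomorphism. $\mathcal{G}\setminus e$ is a building set of $\mathcal{L}(\mathrm{M}\setminus e)$. $\mathcal{S}\subseteq\mathcal{G}$ is nested if for every antichain $A\subseteq\mathcal{S}$ and every $\{S_1,\dots,S_k\}\subseteq A$, $k\geqslant2$, $S_1\vee\dots\vee S_k\notin\mathcal{G}$. $\mathbf{N}(\mathcal{L},\mathcal{G})$ denotes the simplicial complex of nested sets contained in $\mathcal{G}\setminus\max\mathcal{G}$; a built matroid is flag if this complex is flag (all minimal non-faces have size $2$). *)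

theory Defs
  imports "HOL-Library.FuncSet"
begin

definition matroid :: "'a set \<Rightarrow> ('a set \<Rightarrow> bool) \<Rightarrow> bool" where
  "matroid E Ind \<longleftrightarrow> finite E \<and> (\<forall>X. Ind X \<longrightarrow> X \<subseteq> E) \<and> Ind {} \<and>
     (\<forall>X Y. Ind X \<and> Y \<subseteq> X \<longrightarrow> Ind Y) \<and>
     (\<forall>X Y. Ind X \<and> Ind Y \<and> card X < card Y \<longrightarrow> (\<exists>y \<in> Y - X. Ind (insert y X)))"

text \<open>Simple: no loops and no parallel pairs.\<close>
definition simple_matroid :: "'a set \<Rightarrow> ('a set \<Rightarrow> bool) \<Rightarrow> bool" where
  "simple_matroid E Ind \<longleftrightarrow> matroid E Ind \<and> (\<forall>x\<in>E. \<forall>y\<in>E. Ind {x, y})"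

definition rk :: "('a set \<Rightarrow> bool) \<Rightarrow> 'a set \<Rightarrow> nat" where
  "rk Ind X = Max (card ` {Y. Y \<subseteq> X \<and> Ind Y})"

definition cl :: "'a set \<Rightarrow> ('a set \<Rightarrow> bool) \<Rightarrow> 'a set \<Rightarrow> 'a set" where
  "cl E Ind X = {x \<in> E. rk Ind (insert x X) = rk Ind X}"

definition flat :: "'a set \<Rightarrow> ('a set \<Rightarrow> bool) \<Rightarrow> 'a set \<Rightarrow> bool" where
  "flat E Ind F \<longleftrightarrow> F \<subseteq> E \<and> cl E Ind F = F"

definition del_ground :: "'a set \<Rightarrow> 'a \<Rightarrow> 'a set" where
  "del_ground E e = E - {e}"

definition del_indep :: "('a set \<Rightarrow> bool) \<Rightarrow> 'a \<Rightarrow> 'a set \<Rightarrow> bool" where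
  "del_indep Ind e X \<longleftrightarrow> Ind X \<and> e \<notin> X"

definition maxset :: "'a set set \<Rightarrow> 'a set set" where
  "maxset \<G> = {G \<in> \<G>. \<not> (\<exists>H \<in> \<G>. G \<subset> H)}"

text \<open>Building set of the lattice of flats (bottom = empty flat, join = closure of union).\<close>
definition building_set :: "'a set \<Rightarrow> ('a set \<Rightarrow> bool) \<Rightarrow> 'a set set \<Rightarrow> bool" where
  "building_set E Ind \<G> \<longleftrightarrow>
     \<G> \<subseteq> {F. flat E Ind F \<and> F \<noteq> {}} \<and>
     (\<forall>F. flat E Ind F \<and> F \<noteq> {} \<longrightarrow>
        (let D = maxset {G \<in> \<G>. G \<subseteq> F};
             P = (\<Pi>\<^sub>E G\<in>D. {H. flat E Ind H \<and> H \<subseteq> G});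
             j = (\<lambda>x. cl E Ind (\<Union>G\<in>D. x G))
         in bij_betw j P {H. flat E Ind H \<and> H \<subseteq> F} \<and>
            (\<forall>x\<in>P. \<forall>y\<in>P. (\<forall>G\<in>D. x G \<subseteq> y G) \<longleftrightarrow> j x \<subseteq> j y)))"

definition antichain :: "'a set set \<Rightarrow> bool" where
  "antichain A \<longleftrightarrow> (\<forall>X\<in>A. \<forall>Y\<in>A. X \<subseteq> Y \<longrightarrow> X = Y)"

definition nested :: "'a set \<Rightarrow> ('a set \<Rightarrow> bool) \<Rightarrow> 'a set set \<Rightarrow> 'a set set \<Rightarrow> bool" where
  "nested E Ind \<G> S \<longleftrightarrow> S \<subseteq> \<G> \<and>
     (\<forall>A. A \<subseteq> S \<and> antichain A \<longrightarrow>
        (\<forall>T. T \<subseteq> A \<and> card T \<ge> 2 \<longrightarrow> cl E Ind (\<Union>T) \<notin> \<G>))"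

definition nested_face :: "'a set \<Rightarrow> ('a set \<Rightarrow> bool) \<Rightarrow> 'a set set \<Rightarrow> 'a set set \<Rightarrow> bool" where
  "nested_face E Ind \<G> S \<longleftrightarrow> S \<subseteq> \<G> - maxset \<G> \<and> nested E Ind \<G> S"

definition flag :: "'a set \<Rightarrow> ('a set \<Rightarrow> bool) \<Rightarrow> 'a set set \<Rightarrow> bool" where
  "flag E Ind \<G> \<longleftrightarrow>
     (\<forall>T. T \<subseteq> \<G> - maxset \<G> \<and> \<not> nested_face E Ind \<G> T \<and>
          (\<forall>T'. T' \<subset> T \<longrightarrow> nested_face E Ind \<G> T') \<longrightarrow> card T = 2)"

definition del_building :: "'a set \<Rightarrow> ('a set \<Rightarrow> bool) \<Rightarrow> 'a set set \<Rightarrow> 'a \<Rightarrow> 'a set set" where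
  "del_building E Ind \<G> e =
     {S. flat (del_ground E e) (del_indep Ind e) S \<and> cl E Ind S \<in> \<G>}"

end

theory Submission
  imports Defs
begin

lemma m_fin: "matroid E Ind \<Longrightarrow> finite {Y. Y \<subseteq> X \<and> Ind Y}"
  unfolding matroid_def
  by (rule finite_subset[of _ "Pow E"]) auto

lemma rk_ge: "matroid E Ind \<Longrightarrow> Y \<subseteq> X \<Longrightarrow> Ind Y \<Longrightarrow> card Y \<le> rk Ind X"
  unfolding rk_def using m_fin[of E Ind X]
  by (intro Max_ge) auto

lemma rk_ex: "matroid E Ind \<Longrightarrow> \<exists>Y. Y \<subseteq> X \<and> Ind Y \<and> card Y = rk Ind X"
proof -
  assume m: "matroid E Ind"
  have "{} \<in> {Y. Y \<subseteq> X \<and> Ind Y}" using m unfolding matroid_def by auto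
  then have "rk Ind X \<in> card ` {Y. Y \<subseteq> X \<and> Ind Y}"
    unfolding rk_def using m_fin[OF m, of X] by (intro Max_in) auto
  then show ?thesis by auto
qed

lemma rk_mono: "matroid E Ind \<Longrightarrow> A \<subseteq> B \<Longrightarrow> rk Ind A \<le> rk Ind B"
  by (metis rk_ex rk_ge order_trans)

lemma extend:
  assumes m: "matroid E Ind"
  shows "I \<subseteq> X \<Longrightarrow> Ind I \<Longrightarrow> \<exists>J. I \<subseteq> J \<and> J \<subseteq> X \<and> Ind J \<and> card J = rk Ind X"
proof (induction "rk Ind X - card I" arbitrary: I rule: less_induct)
  case less
  show ?case
  proof (cases "card I < rk Ind X")
    case False
    then show ?thesis using rk_ge[OF m less.prems] less.prems by (intro exI[of _ I]) auto
  next
    case True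
    obtain Y where Y: "Y \<subseteq> X" "Ind Y" "card Y = rk Ind X" using rk_ex[OF m] by blast
    then obtain y where y: "y \<in> Y - I" "Ind (insert y I)"
      using m True less.prems unfolding matroid_def by metis
    have fI: "finite I" using m less.prems unfolding matroid_def by (meson finite_subset)
    have c: "card (insert y I) = card I + 1" using y fI by simp
    have "rk Ind X - card (insert y I) < rk Ind X - card I" using c True by simp
    from less.hyps[OF this] obtain J where "insert y I \<subseteq> J" "J \<subseteq> X" "Ind J" "card J = rk Ind X"
      using y Y less.prems by auto
    then show ?thesis by auto
  qed
qed

lemma L4:
  assumes m: "matroid E Ind" and I: "I \<subseteq> A" "Ind I" "card I = rk Ind A" and x: "x \<notin> A"
  shows "rk Ind (insert x A) = rk Ind A \<longleftrightarrow> \<not> Ind (insert x I)"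
proof
  assume r: "rk Ind (insert x A) = rk Ind A"
  show "\<not> Ind (insert x I)"
  proof
    assume h: "Ind (insert x I)"
    have fI: "finite I" using m I unfolding matroid_def by (meson finite_subset)
    have "x \<notin> I" using x I by auto
    then have "card (insert x I) = card I + 1" using fI by simp
    moreover have "card (insert x I) \<le> rk Ind (insert x A)" using rk_ge[OF m _ h] I by auto
    ultimately show False using r I by simp
  qed
next
  assume h: "\<not> Ind (insert x I)"
  show "rk Ind (insert x A) = rk Ind A"
  proof (rule ccontr)
    assume ne: "rk Ind (insert x A) \<noteq> rk Ind A"
    have "rk Ind A \<le> rk Ind (insert x A)" by (rule rk_mono[OF m]) auto
    with ne have lt: "card I < rk Ind (insert x A)" using I by simp
    obtain J where J: "I \<subseteq> J" "J \<subseteq> insert x A" "Ind J" "card J = rk Ind (insert x A)"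
      using extend[OF m, of I "insert x A"] I by auto
    show False
    proof (cases "x \<in> J")
      case True
      then have "insert x I \<subseteq> J" using J by auto
      then show False using h J m unfolding matroid_def by blast
    next
      case False
      then have "J \<subseteq> A" using J by auto
      then have "card J \<le> rk Ind A" using rk_ge[OF m _ J(3)] by blast
      then show False using J lt I by simp
    qed
  qed
qed

lemma cl_sub: "A \<subseteq> E \<Longrightarrow> A \<subseteq> cl E Ind A"
  unfolding cl_def by (auto simp: insert_absorb)

lemma cl_E: "cl E Ind A \<subseteq> E"
  unfolding cl_def by auto

lemma cl_mono:
  assumes m: "matroid E Ind" and AB: "A \<subseteq> B"
  shows "cl E Ind A \<subseteq> cl E Ind B"
proof
  fix x assume x: "x \<in> cl E Ind A"
  then have xE: "x \<in> E" and r: "rk Ind (insert x A) = rk Ind A" unfolding cl_def by auto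
  show "x \<in> cl E Ind B"
  proof (cases "x \<in> B")
    case True then show ?thesis using xE unfolding cl_def by (simp add: insert_absorb)
  next
    case False
    then have xA: "x \<notin> A" using AB by auto
    obtain I where I: "I \<subseteq> A" "Ind I" "card I = rk Ind A" using rk_ex[OF m] by blast
    obtain J where J: "I \<subseteq> J" "J \<subseteq> B" "Ind J" "card J = rk Ind B"
      using extend[OF m, of I B] I AB by auto
    have "\<not> Ind (insert x I)" using L4[OF m I xA] r by simp
    then have "\<not> Ind (insert x J)" using J m unfolding matroid_def
      by (meson insert_mono)
    then have "rk Ind (insert x B) = rk Ind B" using L4[OF m J(2-4) False] by simp
    then show ?thesis using xE unfolding cl_def by simp
  qed
qed

lemma cl_idem:
  assumes m: "matroid E Ind" and AE: "A \<subseteq> E"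
  shows "cl E Ind (cl E Ind A) = cl E Ind A"
proof
  show "cl E Ind A \<subseteq> cl E Ind (cl E Ind A)" by (rule cl_sub[OF cl_E])
next
  obtain I where I: "I \<subseteq> A" "Ind I" "card I = rk Ind A" using rk_ex[OF m] by blast
  have AcA: "A \<subseteq> cl E Ind A" by (rule cl_sub[OF AE])
  have rkc: "rk Ind (cl E Ind A) = card I"
  proof (rule ccontr)
    assume ne: "rk Ind (cl E Ind A) \<noteq> card I"
    have "card I \<le> rk Ind (cl E Ind A)" using rk_ge[OF m _ I(2)] I AcA by auto
    with ne have lt: "card I < rk Ind (cl E Ind A)" by simp
    obtain J where J: "I \<subseteq> J" "J \<subseteq> cl E Ind A" "Ind J" "card J = rk Ind (cl E Ind A)"
      using extend[OF m, of I "cl E Ind A"] I AcA by auto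
    have "J \<noteq> I" using J lt by auto
    then obtain y where y: "y \<in> J" "y \<notin> I" using J by auto
    have iy: "Ind (insert y I)" using J y m unfolding matroid_def
      by (meson insert_subset)
    have fI: "finite I" using m I unfolding matroid_def by (meson finite_subset AE)
    show False
    proof (cases "y \<in> A")
      case True
      then have "card (insert y I) \<le> rk Ind A" using rk_ge[OF m _ iy] I by auto
      then show False using fI y I by simp
    next
      case False
      have "y \<in> cl E Ind A" using y J by auto
      then have "rk Ind (insert y A) = rk Ind A" unfolding cl_def by auto
      then show False using L4[OF m I False] iy by simp
    qed
  qed
  show "cl E Ind (cl E Ind A) \<subseteq> cl E Ind A"
  proof
    fix x assume x: "x \<in> cl E Ind (cl E Ind A)"
    show "x \<in> cl E Ind A"
    proof (cases "x \<in> cl E Ind A")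
      case False
      then have xA: "x \<notin> A" using AcA by auto
      have I': "I \<subseteq> cl E Ind A" "Ind I" "card I = rk Ind (cl E Ind A)" using I AcA rkc by auto
      have "rk Ind (insert x (cl E Ind A)) = rk Ind (cl E Ind A)" using x unfolding cl_def by auto
      then have "\<not> Ind (insert x I)" using L4[OF m I' False] by simp
      then have "rk Ind (insert x A) = rk Ind A" using L4[OF m I xA] by simp
      then show ?thesis using x cl_E unfolding cl_def by auto
    qed
  qed
qed


lemma rk_del: "e \<notin> X \<Longrightarrow> rk (del_indep Ind e) X = rk Ind X"
proof -
  assume "e \<notin> X"
  then have "{Y. Y \<subseteq> X \<and> del_indep Ind e Y} = {Y. Y \<subseteq> X \<and> Ind Y}"
    unfolding del_indep_def by auto
  then show ?thesis unfolding rk_def by simp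
qed

lemma cl_del: "e \<notin> X \<Longrightarrow> cl (del_ground E e) (del_indep Ind e) X = cl E Ind X - {e}"
proof -
  assume ne: "e \<notin> X"
  have "\<And>x. x \<in> E - {e} \<Longrightarrow> rk (del_indep Ind e) (insert x X) = rk Ind (insert x X)"
    using ne by (intro rk_del) auto
  then show ?thesis unfolding cl_def del_ground_def using rk_del[OF ne, of Ind] by auto
qed

lemma cl_cl_del:
  assumes m: "matroid E Ind" and X: "X \<subseteq> E" "e \<notin> X"
  shows "cl E Ind (cl E Ind X - {e}) = cl E Ind X"
proof
  have "X \<subseteq> cl E Ind X - {e}" using cl_sub[OF X(1)] X(2) by auto
  then show "cl E Ind X \<subseteq> cl E Ind (cl E Ind X - {e})" by (rule cl_mono[OF m])
  have "cl E Ind (cl E Ind X - {e}) \<subseteq> cl E Ind (cl E Ind X)" by (rule cl_mono[OF m]) auto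
  then show "cl E Ind (cl E Ind X - {e}) \<subseteq> cl E Ind X" using cl_idem[OF m X(1)] by simp
qed

lemma cl_union_img:
  assumes m: "matroid E Ind" and T: "\<Union>T \<subseteq> E"
  shows "cl E Ind (\<Union>(cl E Ind ` T)) = cl E Ind (\<Union>T)"
proof
  have "\<Union>T \<subseteq> \<Union>(cl E Ind ` T)"
  proof
    fix x assume "x \<in> \<Union>T"
    then obtain S where S: "S \<in> T" "x \<in> S" by blast
    then have "S \<subseteq> E" using T by blast
    then have "x \<in> cl E Ind S" using cl_sub[of S E Ind] S by blast
    then show "x \<in> \<Union>(cl E Ind ` T)" using S by blast
  qed
  then show "cl E Ind (\<Union>T) \<subseteq> cl E Ind (\<Union>(cl E Ind ` T))" by (rule cl_mono[OF m])
  have "\<Union>(cl E Ind ` T) \<subseteq> cl E Ind (\<Union>T)"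
  proof (rule Union_least)
    fix Y assume "Y \<in> cl E Ind ` T"
    then obtain S where "S \<in> T" "Y = cl E Ind S" by blast
    then show "Y \<subseteq> cl E Ind (\<Union>T)" using cl_mono[OF m, of S "\<Union>T"] by blast
  qed
  then have "cl E Ind (\<Union>(cl E Ind ` T)) \<subseteq> cl E Ind (cl E Ind (\<Union>T))" by (rule cl_mono[OF m])
  then show "cl E Ind (\<Union>(cl E Ind ` T)) \<subseteq> cl E Ind (\<Union>T)" using cl_idem[OF m T] by simp
qed

lemma flat_del:
  assumes "flat (del_ground E e) (del_indep Ind e) S"
  shows "S \<subseteq> E - {e}" "S = cl E Ind S - {e}"
proof -
  show S: "S \<subseteq> E - {e}" using assms unfolding flat_def del_ground_def by auto
  then have "e \<notin> S" by auto
  then show "S = cl E Ind S - {e}" using assms cl_del[of e S E Ind] unfolding flat_def by simp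
qed

lemma key_mem:
  assumes m: "matroid E Ind" and T: "T \<subseteq> del_building E Ind \<G> e"
  shows "cl (del_ground E e) (del_indep Ind e) (\<Union>T) \<in> del_building E Ind \<G> e
     \<longleftrightarrow> cl E Ind (\<Union>(cl E Ind ` T)) \<in> \<G>"
proof -
  have sub: "\<Union>T \<subseteq> E - {e}"
  proof (rule Union_least)
    fix S assume "S \<in> T"
    then have "flat (del_ground E e) (del_indep Ind e) S" using T unfolding del_building_def by blast
    then show "S \<subseteq> E - {e}" by (rule flat_del(1))
  qed
  then have ne: "e \<notin> \<Union>T" and sE: "\<Union>T \<subseteq> E" by auto
  define C where "C = cl E Ind (\<Union>T)"
  have c1: "cl (del_ground E e) (del_indep Ind e) (\<Union>T) = C - {e}"
    using cl_del[OF ne] unfolding C_def by simp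
  have c2: "cl E Ind (C - {e}) = C" using cl_cl_del[OF m sE ne] unfolding C_def .
  have c3: "cl (del_ground E e) (del_indep Ind e) (C - {e}) = C - {e}"
    using cl_del[of e "C - {e}" E Ind] c2 by simp
  have c4: "C - {e} \<subseteq> del_ground E e" using cl_E[of E Ind "\<Union>T"] unfolding C_def del_ground_def by blast
  have fl: "flat (del_ground E e) (del_indep Ind e) (C - {e})"
    unfolding flat_def using c3 c4 by simp
  have c5: "cl E Ind (\<Union>(cl E Ind ` T)) = C" using cl_union_img[OF m sE] unfolding C_def .
  show ?thesis unfolding c1 c5 del_building_def using fl c2 by simp
qed

lemma ord_del:
  assumes m: "matroid E Ind" and S: "S1 \<in> del_building E Ind \<G> e" "S2 \<in> del_building E Ind \<G> e"
  shows "S1 \<subseteq> S2 \<longleftrightarrow> cl E Ind S1 \<subseteq> cl E Ind S2"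
proof
  assume "S1 \<subseteq> S2" then show "cl E Ind S1 \<subseteq> cl E Ind S2" by (rule cl_mono[OF m])
next
  assume h: "cl E Ind S1 \<subseteq> cl E Ind S2"
  have f1: "flat (del_ground E e) (del_indep Ind e) S1" using S(1) unfolding del_building_def by simp
  have f2: "flat (del_ground E e) (del_indep Ind e) S2" using S(2) unfolding del_building_def by simp
  have "cl E Ind S1 - {e} \<subseteq> cl E Ind S2 - {e}" using h by (rule Diff_mono) simp
  then show "S1 \<subseteq> S2" using flat_del(2)[OF f1] flat_del(2)[OF f2] by simp
qed

lemma inj_del:
  assumes m: "matroid E Ind"
  shows "inj_on (cl E Ind) (del_building E Ind \<G> e)"
proof (rule inj_onI)
  fix x y assume xy: "x \<in> del_building E Ind \<G> e" "y \<in> del_building E Ind \<G> e" "cl E Ind x = cl E Ind y"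
  have "x \<subseteq> y" using ord_del[OF m xy(1,2)] xy(3) by simp
  moreover have "y \<subseteq> x" using ord_del[OF m xy(2,1)] xy(3) by simp
  ultimately show "x = y" by (rule subset_antisym)
qed

lemma nested_iff:
  assumes m: "matroid E Ind" and S: "S \<subseteq> del_building E Ind \<G> e"
  shows "nested (del_ground E e) (del_indep Ind e) (del_building E Ind \<G> e) S
     \<longleftrightarrow> nested E Ind \<G> (cl E Ind ` S)"
proof
  assume h: "nested (del_ground E e) (del_indep Ind e) (del_building E Ind \<G> e) S"
  show "nested E Ind \<G> (cl E Ind ` S)"
    unfolding nested_def
  proof (intro conjI allI impI)
    show "cl E Ind ` S \<subseteq> \<G>" using S unfolding del_building_def by auto
    fix A T assume A: "A \<subseteq> cl E Ind ` S \<and> antichain A" and T: "T \<subseteq> A \<and> 2 \<le> card T"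
    define A' where "A' = {s\<in>S. cl E Ind s \<in> A}"
    define T' where "T' = {s\<in>S. cl E Ind s \<in> T}"
    have iA: "cl E Ind ` A' = A" using A unfolding A'_def by auto
    have iT: "cl E Ind ` T' = T" using A T unfolding T'_def by auto
    have inj: "inj_on (cl E Ind) S" using inj_on_subset[OF inj_del[OF m] S] .
    have ac: "antichain A'" unfolding antichain_def
    proof (intro ballI impI)
      fix X Y assume XY: "X \<in> A'" "Y \<in> A'" "X \<subseteq> Y"
      then have "cl E Ind X \<subseteq> cl E Ind Y" using cl_mono[OF m] by blast
      then have "cl E Ind X = cl E Ind Y" using A XY unfolding antichain_def A'_def by blast
      then show "X = Y" using inj XY unfolding A'_def inj_on_def by blast
    qed
    have TA: "T' \<subseteq> A'" using T unfolding T'_def A'_def by auto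
    have "card T' = card T" using iT inj_on_subset[OF inj, of T'] card_image[of "cl E Ind" T']
      unfolding T'_def by auto
    then have "cl (del_ground E e) (del_indep Ind e) (\<Union>T') \<notin> del_building E Ind \<G> e"
    proof -
      have "A' \<subseteq> S" unfolding A'_def by auto
      moreover have "2 \<le> card T'" using T \<open>card T' = card T\<close> by simp
      ultimately show ?thesis using h ac TA unfolding nested_def by blast
    qed
    then show "cl E Ind (\<Union>T) \<notin> \<G>" using key_mem[OF m, of T' \<G> e] S iT
      unfolding T'_def by auto
  qed
next
  assume h: "nested E Ind \<G> (cl E Ind ` S)"
  show "nested (del_ground E e) (del_indep Ind e) (del_building E Ind \<G> e) S"
    unfolding nested_def
  proof (intro conjI allI impI)
    show "S \<subseteq> del_building E Ind \<G> e" using S .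
    fix A T assume A: "A \<subseteq> S \<and> antichain A" and T: "T \<subseteq> A \<and> 2 \<le> card T"
    have inj: "inj_on (cl E Ind) S" using inj_on_subset[OF inj_del[OF m] S] .
    have ac: "antichain (cl E Ind ` A)" unfolding antichain_def
    proof (intro ballI impI)
      fix X Y assume XY: "X \<in> cl E Ind ` A" "Y \<in> cl E Ind ` A" "X \<subseteq> Y"
      then obtain a b where ab: "a \<in> A" "b \<in> A" "X = cl E Ind a" "Y = cl E Ind b" by auto
      then have "a \<subseteq> b" using ord_del[OF m, of a \<G> e b] A S XY by auto
      then have "a = b" using A ab unfolding antichain_def by blast
      then show "X = Y" using ab by simp
    qed
    have "card (cl E Ind ` T) = card T" using inj_on_subset[OF inj, of T] card_image A T by blast
    moreover have "cl E Ind ` A \<subseteq> cl E Ind ` S" using A by auto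
    moreover have "cl E Ind ` T \<subseteq> cl E Ind ` A" using T by auto
    ultimately have "cl E Ind (\<Union>(cl E Ind ` T)) \<notin> \<G>"
      using h ac T unfolding nested_def by simp
    then show "cl (del_ground E e) (del_indep Ind e) (\<Union>T) \<notin> del_building E Ind \<G> e"
      using key_mem[OF m, of T \<G> e] S A T by auto
  qed
qed

lemma max_del:
  assumes m: "matroid E Ind" and S: "S \<in> del_building E Ind \<G> e - maxset (del_building E Ind \<G> e)"
  shows "cl E Ind S \<in> \<G> - maxset \<G>"
proof -
  have S1: "S \<in> del_building E Ind \<G> e" using S by auto
  then obtain S' where S': "S' \<in> del_building E Ind \<G> e" "S \<subset> S'" using S unfolding maxset_def by auto
  have "cl E Ind S \<subseteq> cl E Ind S'" using ord_del[OF m S1 S'(1)] S' by auto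
  moreover have "cl E Ind S \<noteq> cl E Ind S'" using inj_del[OF m] S1 S' unfolding inj_on_def by blast
  moreover have "cl E Ind S' \<in> \<G>" "cl E Ind S \<in> \<G>" using S1 S' unfolding del_building_def by auto
  ultimately show ?thesis unfolding maxset_def by auto
qed

lemma face_iff:
  assumes m: "matroid E Ind" and S: "S \<subseteq> del_building E Ind \<G> e - maxset (del_building E Ind \<G> e)"
  shows "nested_face (del_ground E e) (del_indep Ind e) (del_building E Ind \<G> e) S
     \<longleftrightarrow> nested_face E Ind \<G> (cl E Ind ` S)"
proof -
  have "cl E Ind ` S \<subseteq> \<G> - maxset \<G>" using max_del[OF m] S by blast
  moreover have "S \<subseteq> del_building E Ind \<G> e" using S by auto
  ultimately show ?thesis unfolding nested_face_def using nested_iff[OF m] S by auto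
qed

theorem lemma3p18:
  fixes E :: "'a set" and Ind :: "'a set \<Rightarrow> bool" and \<G> :: "'a set set" and e :: 'a
  assumes "simple_matroid E Ind"
    and "building_set E Ind \<G>"
    and "flag E Ind \<G>"
    and "e \<in> E"
  shows "flag (del_ground E e) (del_indep Ind e) (del_building E Ind \<G> e)"
  unfolding flag_def
proof (intro allI impI)
  have m: "matroid E Ind" using assms(1) unfolding simple_matroid_def by simp
  let ?V = "del_building E Ind \<G> e - maxset (del_building E Ind \<G> e)"
  let ?f = "nested_face (del_ground E e) (del_indep Ind e) (del_building E Ind \<G> e)"
  fix T assume h: "T \<subseteq> ?V \<and> \<not> ?f T \<and> (\<forall>T'. T' \<subset> T \<longrightarrow> ?f T')"
  have TV: "T \<subseteq> ?V" using h by simp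
  have inj: "inj_on (cl E Ind) T" using inj_on_subset[OF inj_del[OF m]] TV by blast
  have a1: "cl E Ind ` T \<subseteq> \<G> - maxset \<G>" using max_del[OF m] TV by blast
  have a2: "\<not> nested_face E Ind \<G> (cl E Ind ` T)" using face_iff[OF m TV] h by simp
  have a3: "\<forall>U. U \<subset> cl E Ind ` T \<longrightarrow> nested_face E Ind \<G> U"
  proof (intro allI impI)
    fix U assume U: "U \<subset> cl E Ind ` T"
    define T'' where "T'' = {s\<in>T. cl E Ind s \<in> U}"
    have iU: "cl E Ind ` T'' = U" using U unfolding T''_def by auto
    have "T'' \<subset> T" using U iU unfolding T''_def by auto
    then have "?f T''" using h by simp
    moreover have "T'' \<subseteq> ?V" using TV unfolding T''_def by auto
    ultimately show "nested_face E Ind \<G> U" using face_iff[OF m] iU by blast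
  qed
  have "card (cl E Ind ` T) = 2" using assms(3) a1 a2 a3 unfolding flag_def by blast
  then show "card T = 2" using card_image[OF inj] by simp
qed

end
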